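(* Let $\rho\in(0,1)$ and let $(D_m)_{m\in\mathbb Z}$ be i.i.d. random variables with density $e^{-d}$ on $[0,\infty)$. For $j\ge1$ let $d_{i,i+j}=D_i+\dots+D_{i+j-1}$ and $d_{i,i-j}=D_{i-1}+\dots+D_{i-j}$, and let $$y_i=K\Big[1+\sum_{j=1}^\infty\rho^{d_{i,i+j}}+\sum_{j=1}^\infty\rho^{d_{i,i-j}}\Big],\qquad K=\frac{-\log\rho}{2-\log\rho}.$$ Then $E[y_i]=1$ and $\mathrm{Var}(y_i)=\frac{-\log\rho}{(2-\log\rho)^2}$. Moreover, with $u=\sum_{j=0}^\infty\rho^{d_{i,i+j}}$ (where $d_{i,i}=0$), $\mathrm{Var}(u)=-\frac{1}{2\log\rho}$.
   Context: $y_i$ is the exponentially weighted local average at sensor $i$ when all measurements equal $1$ and inter-sensor distances are independent exponential(1) random variables. *)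

theory Defs
  imports "HOL-Probability.Probability"
begin

definition dfwd :: "(int \<Rightarrow> 'a \<Rightarrow> real) \<Rightarrow> int \<Rightarrow> nat \<Rightarrow> 'a \<Rightarrow> real" where
  "dfwd D i j \<omega> = (\<Sum>m\<in>{i..<i + int j}. D m \<omega>)"

definition dbwd :: "(int \<Rightarrow> 'a \<Rightarrow> real) \<Rightarrow> int \<Rightarrow> nat \<Rightarrow> 'a \<Rightarrow> real" where
  "dbwd D i j \<omega> = (\<Sum>m\<in>{i - int j..<i}. D m \<omega>)"

end

theory Submission
  imports Defs
begin


lemma exp_density_int:
  fixes b :: real assumes b: "b \<ge> 0"
  shows "(\<integral>\<^sup>+x. ennreal (exponential_density 1 x) * ennreal (exp (- b * x)) \<partial>lborel) = ennreal (1/(1+b))"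
proof -
  have pt: "ennreal (exponential_density 1 x) * ennreal (exp (- b * x)) = ennreal (1/(1+b)) * ennreal (exponential_density (1+b) x)" for x
  proof -
    have "exponential_density 1 x * exp (- b * x) = (1/(1+b)) * exponential_density (1+b) x"
    proof -
      have "1+b > 0" using b by simp
      then show ?thesis by (auto simp: exponential_density_def exp_add[symmetric] field_simps)
    qed
    then show ?thesis using b by (simp add: ennreal_mult'[symmetric] exponential_density_def)
  qed
  have "prob_space (density lborel (exponential_density (1+b)))"
    using b by (intro prob_space_exponential_density) auto
  then have "emeasure (density lborel (exponential_density (1+b))) UNIV = 1"
    using prob_space.emeasure_space_1 by fastforce
  then have one: "(\<integral>\<^sup>+x. ennreal (exponential_density (1+b) x) \<partial>lborel) = 1"
    by (simp add: emeasure_density nn_integral_density)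
  show ?thesis
    unfolding pt by (subst nn_integral_cmult) (auto simp: one)
qed

locale setting = prob_space M for M :: "'a measure" +
  fixes D :: "int \<Rightarrow> 'a \<Rightarrow> real" and \<rho> :: real
  assumes rho: "0 < \<rho>" "\<rho> < 1"
    and indep: "indep_vars (\<lambda>_. borel) D UNIV"
    and distr: "\<And>m. distributed M lborel (D m) (exponential_density 1)"
begin

definition "a = - ln \<rho>"

lemma a_pos: "a > 0" using rho by (simp add: a_def)

lemma D_meas[measurable]: "D m \<in> borel_measurable M"
  using distributed_measurable[OF distr[of m]] by simp

lemma single:
  assumes c: "c \<ge> 0"
  shows "(\<integral>\<^sup>+\<omega>. ennreal (\<rho> powr (c * D m \<omega>)) \<partial>M) = ennreal (1/(1+c*a))"
proof -
  have eq: "\<rho> powr (c * x) = exp (- (c*a) * x)" for x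
    using rho by (simp add: powr_def a_def)
  have "(\<integral>\<^sup>+\<omega>. ennreal (\<rho> powr (c * D m \<omega>)) \<partial>M)
      = (\<integral>\<^sup>+x. ennreal (exponential_density 1 x) * ennreal (exp (- (c*a) * x)) \<partial>lborel)"
    unfolding eq by (subst distributed_nn_integral[OF distr[of m]]) auto
  also have "\<dots> = ennreal (1/(1+c*a))"
    using c a_pos by (intro exp_density_int) simp
  finally show ?thesis .
qed

lemma prodlem:
  assumes I: "finite I" and c: "\<And>m. c m \<ge> 0"
  shows "(\<integral>\<^sup>+\<omega>. ennreal (\<rho> powr (\<Sum>m\<in>I. c m * D m \<omega>)) \<partial>M) = ennreal (\<Prod>m\<in>I. 1/(1+c m*a))"
proof -
  have "(\<integral>\<^sup>+\<omega>. ennreal (\<rho> powr (\<Sum>m\<in>I. c m * D m \<omega>)) \<partial>M)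
     = (\<integral>\<^sup>+\<omega>. (\<Prod>m\<in>I. ennreal (\<rho> powr (c m * D m \<omega>))) \<partial>M)"
    using rho by (simp add: powr_sum prod_ennreal)
  also have "\<dots> = (\<Prod>m\<in>I. \<integral>\<^sup>+\<omega>. ennreal (\<rho> powr (c m * D m \<omega>)) \<partial>M)"
    by (intro indep_vars_nn_integral I indep_vars_compose2[OF indep_vars_subset[OF indep]]) auto
  also have "\<dots> = (\<Prod>m\<in>I. ennreal (1/(1+c m*a)))"
    using c by (simp add: single)
  also have "\<dots> = ennreal (\<Prod>m\<in>I. 1/(1+c m*a))"
    using c a_pos by (subst prod_ennreal) auto
  finally show ?thesis .
qed

end




lemma fin_geo:
  fixes q r :: real assumes "q \<noteq> r"
  shows "(\<Sum>k<j. r^k * q^(j-k)) = q*(q^j - r^j)/(q-r)"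
proof (induction j)
  case 0 then show ?case by simp
next
  case (Suc j)
  have "(\<Sum>k<Suc j. r^k * q^(Suc j-k)) = q * (\<Sum>k<j. r^k * q^(j-k)) + r^j * q"
    by (simp add: sum_distrib_left Suc_diff_le mult_ac)
  also have "\<dots> = q*(q^Suc j - r^Suc j)/(q-r)"
    using assms unfolding Suc by (simp add: field_simps)
  finally show ?case .
qed

definition gg :: "real \<Rightarrow> real \<Rightarrow> nat \<Rightarrow> nat \<Rightarrow> real" where
  "gg q r j k = (if j \<le> k then r^j * q^(k-j) else r^k * q^(j-k))"

lemma row_sum:
  fixes q r :: real assumes q: "0 < q" "q < 1" and r: "0 < r" "r < q"
  shows "summable (gg q r j)" "(\<Sum>k. gg q r j k) = r^j/(1-q) + q*(q^j - r^j)/(q-r)"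
proof -
  have sh: "gg q r j (k + j) = r^j * q^k" for k by (simp add: gg_def)
  have s1: "summable (\<lambda>k. gg q r j (k + j))" unfolding sh
    using q by (intro summable_mult summable_geometric) simp
  then show "summable (gg q r j)" by simp
  have "(\<Sum>k. gg q r j k) = (\<Sum>k. gg q r j (k + j)) + (\<Sum>k<j. gg q r j k)"
    using s1 by (intro suminf_split_initial_segment) simp
  also have "(\<Sum>k. gg q r j (k + j)) = r^j/(1-q)"
    unfolding sh using q by (subst suminf_mult) (simp_all add: suminf_geometric summable_geometric)
  also have "(\<Sum>k<j. gg q r j k) = (\<Sum>k<j. r^k * q^(j-k))"
    by (intro sum.cong) (auto simp: gg_def)
  also have "\<dots> = q*(q^j - r^j)/(q-r)" using r by (intro fin_geo) simp
  finally show "(\<Sum>k. gg q r j k) = r^j/(1-q) + q*(q^j - r^j)/(q-r)" .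
qed

lemma total_sum:
  fixes q r :: real assumes q: "0 < q" "q < 1" and r: "0 < r" "r < q"
  shows "(\<Sum>j. r^j/(1-q) + q*(q^j - r^j)/(q-r)) = (1+q)/((1-q)*(1-r))"
    "summable (\<lambda>j. r^j/(1-q) + q*(q^j - r^j)/(q-r))"
proof -
  have eq: "r^j/(1-q) + q*(q^j - r^j)/(q-r) = (q/(q-r)) * q^j + (1/(1-q) - q/(q-r)) * r^j" for j
  proof -
    have "q - r \<noteq> 0" "1 - q \<noteq> 0" using q r by auto
    then show ?thesis by (simp add: divide_simps) (simp add: algebra_simps)
  qed
  have sq: "summable (\<lambda>j::nat. q^j)" "summable (\<lambda>j::nat. r^j)"
    using q r by (auto intro!: summable_geometric)
  show "summable (\<lambda>j. r^j/(1-q) + q*(q^j - r^j)/(q-r))"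
    unfolding eq using sq by (intro summable_add summable_mult)
  have "(\<Sum>j. r^j/(1-q) + q*(q^j - r^j)/(q-r)) = (q/(q-r)) * (1/(1-q)) + (1/(1-q) - q/(q-r)) * (1/(1-r))"
  proof -
    have a1: "(\<Sum>j. (q/(q-r)) * q^j) = (q/(q-r)) * (1/(1-q))"
    proof -
      have g: "(\<Sum>j. q^j) = 1/(1-q)" using q by (intro suminf_geometric) simp
      show ?thesis using suminf_mult[OF sq(1), of "q/(q-r)"] g by simp
    qed
    have a2: "(\<Sum>j. (1/(1-q) - q/(q-r)) * r^j) = (1/(1-q) - q/(q-r)) * (1/(1-r))"
    proof -
      have g: "(\<Sum>j. r^j) = 1/(1-r)" using r q by (intro suminf_geometric) simp
      show ?thesis using suminf_mult[OF sq(2), of "1/(1-q) - q/(q-r)"] g by simp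
    qed
    show ?thesis unfolding eq
      by (subst suminf_add[symmetric]) (auto intro!: summable_mult sq simp only: a1 a2)
  qed
  also have "\<dots> = (1+q)/((1-q)*(1-r))"
  proof -
    have "q - r \<noteq> 0" "1 - q \<noteq> 0" "1 - r \<noteq> 0" using q r by auto
    then show ?thesis by (simp add: divide_simps) (simp add: algebra_simps)
  qed
  finally show "(\<Sum>j. r^j/(1-q) + q*(q^j - r^j)/(q-r)) = (1+q)/((1-q)*(1-r))" .
qed

lemma moment1:
  fixes F :: "nat \<Rightarrow> 'a \<Rightarrow> real" and q :: real
  assumes meas: "\<And>j. F j \<in> borel_measurable M" and q: "0 < q" "q < 1"
    and m1: "\<And>j. (\<integral>\<^sup>+\<omega>. ennreal (F j \<omega>) \<partial>M) = ennreal (q^j)"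
  shows "(\<integral>\<^sup>+\<omega>. (\<Sum>j. ennreal (F j \<omega>)) \<partial>M) = ennreal (1/(1-q))"
proof -
  have "(\<integral>\<^sup>+\<omega>. (\<Sum>j. ennreal (F j \<omega>)) \<partial>M) = (\<Sum>j. ennreal (q^j))"
    using meas by (subst nn_integral_suminf) (auto simp: m1)
  also have "\<dots> = ennreal (\<Sum>j. q^j)"
    using q by (intro suminf_ennreal2 summable_geometric) auto
  also have "(\<Sum>j. q^j) = 1/(1-q)" using q by (intro suminf_geometric) simp
  finally show ?thesis .
qed

lemma square_sum_ennreal:
  fixes e :: "nat \<Rightarrow> ennreal"
  shows "(\<Sum>j. e j) * (\<Sum>k. f k) = (\<Sum>j. \<Sum>k. e j * f k)"
  by (simp only: ennreal_suminf_cmult ennreal_suminf_multc)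

lemma moment2:
  fixes F :: "nat \<Rightarrow> 'a \<Rightarrow> real" and q r :: real
  assumes meas: "\<And>j. F j \<in> borel_measurable M" and q: "0 < q" "q < 1" and r: "0 < r" "r < q"
    and pos: "\<And>j \<omega>. F j \<omega> \<ge> 0"
    and m2: "\<And>j k. j \<le> k \<Longrightarrow> (\<integral>\<^sup>+\<omega>. ennreal (F j \<omega> * F k \<omega>) \<partial>M) = ennreal (r^j * q^(k-j))"
  shows "(\<integral>\<^sup>+\<omega>. (\<Sum>j. ennreal (F j \<omega>)) * (\<Sum>j. ennreal (F j \<omega>)) \<partial>M) = ennreal ((1+q)/((1-q)*(1-r)))"
proof -
  have g: "(\<integral>\<^sup>+\<omega>. ennreal (F j \<omega> * F k \<omega>) \<partial>M) = ennreal (gg q r j k)" for j k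
  proof (cases "j \<le> k")
    case True then show ?thesis by (simp add: m2 gg_def)
  next
    case False then show ?thesis using m2[of k j] by (simp add: gg_def mult.commute)
  qed
  have gpos: "gg q r j k \<ge> 0" for j k using q r by (simp add: gg_def)
  have "(\<integral>\<^sup>+\<omega>. (\<Sum>j. ennreal (F j \<omega>)) * (\<Sum>j. ennreal (F j \<omega>)) \<partial>M)
      = (\<integral>\<^sup>+\<omega>. (\<Sum>j. \<Sum>k. ennreal (F j \<omega> * F k \<omega>)) \<partial>M)"
    unfolding square_sum_ennreal by (simp add: ennreal_mult'[symmetric] pos del: ennreal_suminf_cmult ennreal_suminf_multc)
  also have "\<dots> = (\<Sum>j. \<Sum>k. ennreal (gg q r j k))"
    using meas by (subst nn_integral_suminf) (auto simp: nn_integral_suminf g)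
  also have "\<dots> = (\<Sum>j. ennreal (r^j/(1-q) + q*(q^j - r^j)/(q-r)))"
    using row_sum[OF q r] gpos by (simp add: suminf_ennreal2)
  also have "\<dots> = ennreal ((1+q)/((1-q)*(1-r)))"
  proof -
    have "r^j/(1-q) + q*(q^j - r^j)/(q-r) \<ge> 0" for j
      using row_sum(2)[OF q r, of j, symmetric] row_sum(1)[OF q r, of j] gpos
      by (simp add: suminf_nonneg)
    then show ?thesis using total_sum[OF q r] by (simp add: suminf_ennreal2)
  qed
  finally show ?thesis .
qed

lemma moment_cross:
  fixes F G :: "nat \<Rightarrow> 'a \<Rightarrow> real" and q :: real
  assumes measF: "\<And>j. F j \<in> borel_measurable M" and measG: "\<And>j. G j \<in> borel_measurable M"
    and q: "0 < q" "q < 1"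
    and pos: "\<And>j \<omega>. F j \<omega> \<ge> 0" "\<And>j \<omega>. G j \<omega> \<ge> 0"
    and m2: "\<And>j k. (\<integral>\<^sup>+\<omega>. ennreal (F j \<omega> * G k \<omega>) \<partial>M) = ennreal (q^j * q^k)"
  shows "(\<integral>\<^sup>+\<omega>. (\<Sum>j. ennreal (F j \<omega>)) * (\<Sum>j. ennreal (G j \<omega>)) \<partial>M) = ennreal (1/(1-q) * (1/(1-q)))"
proof -
  have "(\<integral>\<^sup>+\<omega>. (\<Sum>j. ennreal (F j \<omega>)) * (\<Sum>j. ennreal (G j \<omega>)) \<partial>M)
      = (\<integral>\<^sup>+\<omega>. (\<Sum>j. \<Sum>k. ennreal (F j \<omega> * G k \<omega>)) \<partial>M)"
    unfolding square_sum_ennreal by (simp add: ennreal_mult'[symmetric] pos del: ennreal_suminf_cmult ennreal_suminf_multc)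
  also have "\<dots> = (\<Sum>j. \<Sum>k. ennreal (q^j) * ennreal (q^k))"
    using measF measG q by (subst nn_integral_suminf) (auto simp: nn_integral_suminf m2 ennreal_mult)
  also have "\<dots> = (\<Sum>j. ennreal (q^j)) * (\<Sum>j. ennreal (q^j))"
    unfolding square_sum_ennreal ..
  also have "(\<Sum>j. ennreal (q^j)) = ennreal (1/(1-q))"
  proof -
    have "(\<Sum>j. ennreal (q^j)) = ennreal (\<Sum>j. q^j)"
      using q by (intro suminf_ennreal2 summable_geometric) auto
    also have "(\<Sum>j. q^j) = 1/(1-q)" using q by (intro suminf_geometric) simp
    finally show ?thesis .
  qed
  finally show ?thesis using q by (subst ennreal_mult) auto
qed




context setting begin

definition "q = 1/(1+a)"
definition "r = 1/(1+2*a)"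

lemma qr: "0 < q" "q < 1" "0 < r" "r < q"
  using a_pos by (auto simp: q_def r_def field_simps)

lemma two_block:
  assumes A: "finite A" and B: "B \<subseteq> A"
  shows "(\<integral>\<^sup>+\<omega>. ennreal (\<rho> powr (sum (\<lambda>m. D m \<omega>) B + sum (\<lambda>m. D m \<omega>) A)) \<partial>M)
         = ennreal (r^card B * q^(card A - card B))"
proof -
  let ?c = "\<lambda>m. if m \<in> B then 2 else (1::real)"
  have fB: "finite B" using A B finite_subset by blast
  have s: "sum (\<lambda>m. D m \<omega>) B + sum (\<lambda>m. D m \<omega>) A = (\<Sum>m\<in>A. ?c m * D m \<omega>)" for \<omega>
  proof -
    have "(\<Sum>m\<in>A. ?c m * D m \<omega>) = (\<Sum>m\<in>A. (if m \<in> B then D m \<omega> else 0) + D m \<omega>)"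
      by (intro sum.cong) auto
    also have "\<dots> = sum (\<lambda>m. D m \<omega>) (A \<inter> B) + sum (\<lambda>m. D m \<omega>) A"
      using A by (simp add: sum.distrib sum.inter_restrict)
    finally show ?thesis using B by (simp add: Int_absorb1 inf.commute)
  qed
  have p: "(\<Prod>m\<in>A. 1/(1 + ?c m * a)) = r^card B * q^(card A - card B)"
  proof -
    have "(\<Prod>m\<in>A. 1/(1 + ?c m * a)) = (\<Prod>m\<in>A. if m \<in> B then r else q)"
      by (intro prod.cong) (auto simp: q_def r_def)
    also have "\<dots> = prod (\<lambda>_. r) (A \<inter> B) * prod (\<lambda>_. q) (A - B)"
      using A by (simp add: prod.If_cases Diff_eq)
    also have "\<dots> = r^card B * q^(card A - card B)"
      using A B fB by (simp add: Int_absorb1 inf.commute card_Diff_subset)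
    finally show ?thesis .
  qed
  show ?thesis unfolding s p[symmetric]
    by (rule prodlem[OF A]) simp
qed

lemma one_block:
  assumes A: "finite A"
  shows "(\<integral>\<^sup>+\<omega>. ennreal (\<rho> powr (sum (\<lambda>m. D m \<omega>) A)) \<partial>M) = ennreal (q^card A)"
  using prodlem[OF A, of "\<lambda>_. 1"] by (simp add: q_def)

definition F :: "int \<Rightarrow> nat \<Rightarrow> 'a \<Rightarrow> real" where "F i j \<omega> = \<rho> powr dfwd D i j \<omega>"
definition G :: "int \<Rightarrow> nat \<Rightarrow> 'a \<Rightarrow> real" where "G i j \<omega> = \<rho> powr dbwd D i j \<omega>"

lemma F_meas[measurable]: "F i j \<in> borel_measurable M"
  unfolding F_def dfwd_def by measurable
lemma G_meas[measurable]: "G i j \<in> borel_measurable M"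
  unfolding G_def dbwd_def by measurable
lemma FG_pos: "F i j \<omega> \<ge> 0" "G i j \<omega> \<ge> 0" by (auto simp: F_def G_def)

lemma F_m2:
  assumes "j \<le> k"
  shows "(\<integral>\<^sup>+\<omega>. ennreal (F i j \<omega> * F i k \<omega>) \<partial>M) = ennreal (r^j * q^(k-j))"
proof -
  have "F i j \<omega> * F i k \<omega> = \<rho> powr (sum (\<lambda>m. D m \<omega>) {i..<i+int j} + sum (\<lambda>m. D m \<omega>) {i..<i + int k})" for \<omega>
    unfolding F_def dfwd_def by (simp add: powr_add)
  moreover have "{i..<i+int j} \<subseteq> {i..<i + int k}" using assms by auto
  ultimately show ?thesis using two_block[of "{i..<i + int k}" "{i..<i+int j}"] assms by simp
qed

lemma G_m2:
  assumes "j \<le> k"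
  shows "(\<integral>\<^sup>+\<omega>. ennreal (G i j \<omega> * G i k \<omega>) \<partial>M) = ennreal (r^j * q^(k-j))"
proof -
  have "G i j \<omega> * G i k \<omega> = \<rho> powr (sum (\<lambda>m. D m \<omega>) {i - int j..<i} + sum (\<lambda>m. D m \<omega>) {i - int k..<i})" for \<omega>
    unfolding G_def dbwd_def by (simp add: powr_add)
  moreover have "{i - int j..<i} \<subseteq> {i - int k..<i}" using assms by auto
  ultimately show ?thesis using two_block[of "{i - int k..<i}" "{i - int j..<i}"] assms by simp
qed

lemma FG_cross:
  shows "(\<integral>\<^sup>+\<omega>. ennreal (F i j \<omega> * G i k \<omega>) \<partial>M) = ennreal (q^j * q^k)"
proof -
  have "F i j \<omega> * G i k \<omega> = \<rho> powr (sum (\<lambda>m. D m \<omega>) {i - int k..<i + int j})" for \<omega>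
  proof -
    have "{i - int k..<i + int j} = {i..<i+int j} \<union> {i - int k..<i}" by auto
    then have "sum (\<lambda>m. D m \<omega>) {i - int k..<i + int j} = sum (\<lambda>m. D m \<omega>) {i..<i+int j} + sum (\<lambda>m. D m \<omega>) {i - int k..<i}"
      by (simp add: sum.union_disjoint)
    then show ?thesis unfolding F_def G_def dfwd_def dbwd_def by (simp add: powr_add)
  qed
  then show ?thesis using one_block[of "{i - int k..<i + int j}"] by (simp add: power_add flip: of_nat_add)
qed

end




lemma AE_sum_conv:
  fixes F :: "nat \<Rightarrow> 'a \<Rightarrow> real"
  assumes meas: "\<And>j. F j \<in> borel_measurable M" and pos: "\<And>j \<omega>. F j \<omega> \<ge> 0"
    and fin: "(\<integral>\<^sup>+\<omega>. (\<Sum>j. ennreal (F j \<omega>)) \<partial>M) = ennreal v"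
  shows "AE \<omega> in M. summable (\<lambda>j. F j \<omega>) \<and> ennreal (\<Sum>j. F j \<omega>) = (\<Sum>j. ennreal (F j \<omega>))"
proof -
  have "AE \<omega> in M. (\<Sum>j. ennreal (F j \<omega>)) \<noteq> \<infinity>"
    using meas fin by (intro nn_integral_PInf_AE) auto
  then show ?thesis
  proof eventually_elim
    case (elim \<omega>)
    then have "summable (\<lambda>j. F j \<omega>)" using pos by (intro summable_suminf_not_top) auto
    then show ?case using pos by (simp add: suminf_ennreal2)
  qed
qed

context setting begin

definition uf :: "int \<Rightarrow> 'a \<Rightarrow> real" where "uf i \<omega> = (\<Sum>j. F i j \<omega>)"
definition ub :: "int \<Rightarrow> 'a \<Rightarrow> real" where "ub i \<omega> = (\<Sum>j. G i j \<omega>)"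

lemma uf_meas[measurable]: "uf i \<in> borel_measurable M" unfolding uf_def by measurable
lemma ub_meas[measurable]: "ub i \<in> borel_measurable M" unfolding ub_def by measurable

lemma F0: "F i 0 \<omega> = 1" "G i 0 \<omega> = 1" using rho by (auto simp: F_def G_def dfwd_def dbwd_def)

lemma F_m1: "(\<integral>\<^sup>+\<omega>. ennreal (F i j \<omega>) \<partial>M) = ennreal (q^j)"
  using F_m2[of 0 j i] by (simp add: F0)
lemma G_m1: "(\<integral>\<^sup>+\<omega>. ennreal (G i j \<omega>) \<partial>M) = ennreal (q^j)"
  using G_m2[of 0 j i] by (simp add: F0)

definition "Ef = 1/(1-q)"
definition "S2 = (1+q)/((1-q)*(1-r))"

lemma Ef_pos: "Ef > 0" "S2 > 0" using qr by (auto simp: Ef_def S2_def intro!: divide_pos_pos mult_pos_pos)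

lemma UF1: "(\<integral>\<^sup>+\<omega>. (\<Sum>j. ennreal (F i j \<omega>)) \<partial>M) = ennreal Ef"
  unfolding Ef_def by (rule moment1[OF F_meas qr(1,2) F_m1])
lemma UG1: "(\<integral>\<^sup>+\<omega>. (\<Sum>j. ennreal (G i j \<omega>)) \<partial>M) = ennreal Ef"
  unfolding Ef_def by (rule moment1[OF G_meas qr(1,2) G_m1])
lemma UF2: "(\<integral>\<^sup>+\<omega>. (\<Sum>j. ennreal (F i j \<omega>)) * (\<Sum>j. ennreal (F i j \<omega>)) \<partial>M) = ennreal S2"
  unfolding S2_def by (rule moment2[OF F_meas qr FG_pos(1) F_m2])
lemma UG2: "(\<integral>\<^sup>+\<omega>. (\<Sum>j. ennreal (G i j \<omega>)) * (\<Sum>j. ennreal (G i j \<omega>)) \<partial>M) = ennreal S2"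
  unfolding S2_def by (rule moment2[OF G_meas qr FG_pos(2) G_m2])
lemma UFG: "(\<integral>\<^sup>+\<omega>. (\<Sum>j. ennreal (F i j \<omega>)) * (\<Sum>j. ennreal (G i j \<omega>)) \<partial>M) = ennreal (Ef * Ef)"
  unfolding Ef_def by (rule moment_cross[OF F_meas G_meas qr(1,2) FG_pos FG_cross])

lemma AEF: "AE \<omega> in M. summable (\<lambda>j. F i j \<omega>) \<and> ennreal (uf i \<omega>) = (\<Sum>j. ennreal (F i j \<omega>))"
  unfolding uf_def by (rule AE_sum_conv[OF F_meas FG_pos(1) UF1])
lemma AEG: "AE \<omega> in M. summable (\<lambda>j. G i j \<omega>) \<and> ennreal (ub i \<omega>) = (\<Sum>j. ennreal (G i j \<omega>))"
  unfolding ub_def by (rule AE_sum_conv[OF G_meas FG_pos(2) UG1])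

lemma uf_nonneg: "summable (\<lambda>j. F i j \<omega>) \<Longrightarrow> uf i \<omega> \<ge> 0" "summable (\<lambda>j. G i j \<omega>) \<Longrightarrow> ub i \<omega> \<ge> 0"
  unfolding uf_def ub_def using FG_pos by (auto intro!: suminf_nonneg)
lemma uf_nonneg_AE: "AE \<omega> in M. uf i \<omega> \<ge> 0" "AE \<omega> in M. ub i \<omega> \<ge> 0"
  using AEF[of i] AEG[of i] uf_nonneg by auto

lemma hb_uf: "has_bochner_integral M (uf i) Ef"
proof -
  have "(\<integral>\<^sup>+\<omega>. ennreal (uf i \<omega>) \<partial>M) = ennreal Ef"
    unfolding UF1[of i, symmetric] using AEF[of i] by (intro nn_integral_cong_AE) auto
  then show ?thesis using Ef_pos uf_nonneg_AE[of i]
    by (subst (asm) nn_integral_eq_integrable) (auto simp: has_bochner_integral_iff)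
qed

lemma hb_ub: "has_bochner_integral M (ub i) Ef"
proof -
  have "(\<integral>\<^sup>+\<omega>. ennreal (ub i \<omega>) \<partial>M) = ennreal Ef"
    unfolding UG1[of i, symmetric] using AEG[of i] by (intro nn_integral_cong_AE) auto
  then show ?thesis using Ef_pos uf_nonneg_AE[of i]
    by (subst (asm) nn_integral_eq_integrable) (auto simp: has_bochner_integral_iff)
qed

lemma hb_uf2: "has_bochner_integral M (\<lambda>\<omega>. uf i \<omega> * uf i \<omega>) S2"
proof -
  have "(\<integral>\<^sup>+\<omega>. ennreal (uf i \<omega> * uf i \<omega>) \<partial>M) = ennreal S2"
    unfolding UF2[of i, symmetric] using AEF[of i] uf_nonneg
    by (intro nn_integral_cong_AE) (auto simp: ennreal_mult)
  then show ?thesis using Ef_pos uf_nonneg_AE[of i]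
    by (subst (asm) nn_integral_eq_integrable) (auto simp: has_bochner_integral_iff)
qed

lemma hb_ub2: "has_bochner_integral M (\<lambda>\<omega>. ub i \<omega> * ub i \<omega>) S2"
proof -
  have "(\<integral>\<^sup>+\<omega>. ennreal (ub i \<omega> * ub i \<omega>) \<partial>M) = ennreal S2"
    unfolding UG2[of i, symmetric] using AEG[of i] uf_nonneg
    by (intro nn_integral_cong_AE) (auto simp: ennreal_mult)
  then show ?thesis using Ef_pos uf_nonneg_AE[of i]
    by (subst (asm) nn_integral_eq_integrable) (auto simp: has_bochner_integral_iff)
qed

lemma hb_ufb: "has_bochner_integral M (\<lambda>\<omega>. uf i \<omega> * ub i \<omega>) (Ef * Ef)"
proof -
  have "(\<integral>\<^sup>+\<omega>. ennreal (uf i \<omega> * ub i \<omega>) \<partial>M) = ennreal (Ef * Ef)"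
    unfolding UFG[of i, symmetric] using AEF[of i] AEG[of i] uf_nonneg
    by (intro nn_integral_cong_AE) (auto simp: ennreal_mult)
  then show ?thesis using Ef_pos uf_nonneg_AE[of i]
    by (subst (asm) nn_integral_eq_integrable) (auto simp: has_bochner_integral_iff)
qed

lemma hb_const: "has_bochner_integral M (\<lambda>_. c) (c::real)"
  using has_bochner_integral_integrable[of M "\<lambda>_. c"] by (simp add: prob_space)

lemma alg1: "(a::real) > 0 \<Longrightarrow> (a/(2+a)) * ((1+a)/a + (1+a)/a - 1) = 1"
  apply (subgoal_tac "1+a > 0" "1+2*a>0" "2+a>0")
  apply (simp add: divide_simps power2_eq_square)
  apply (simp add: algebra_simps)
  apply auto done
lemma alg2: "(a::real) > 0 \<Longrightarrow> (2+a)*(1+2*a)/(2*a^2) - (1+a)/a * ((1+a)/a) = 1/(2*a)"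
  apply (subgoal_tac "1+a > 0" "1+2*a>0" "2+a>0")
  apply (simp add: divide_simps power2_eq_square)
  apply (simp add: algebra_simps)
  apply auto done
lemma alg3: "(a::real) > 0 \<Longrightarrow> (a/(2+a))^2 * (2*((2+a)*(1+2*a)/(2*a^2)) + 2*((1+a)/a * ((1+a)/a)) - 4*((1+a)/a) + 1) - 1 = a/(2+a)^2"
  apply (subgoal_tac "1+a > 0" "1+2*a>0" "2+a>0")
  apply (simp add: divide_simps power2_eq_square)
  apply (simp add: algebra_simps)
  apply auto done
lemma alg4: "(a::real) > 0 \<Longrightarrow> ((2+a)/(1+a)) / ((a/(1+a)) * (2*a/(1+2*a))) = (2+a)*(1+2*a)/(2*a^2)"
  apply (subgoal_tac "1+a > 0" "1+2*a>0")
  apply (simp add: divide_simps power2_eq_square)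
  apply (simp add: algebra_simps)
  apply auto done

lemma vals: "(a/(2+a)) * (Ef + Ef - 1) = 1"
  "S2 - Ef * Ef = 1/(2*a)"
  "(a/(2+a))^2 * (2*S2 + 2*(Ef*Ef) - 4*Ef + 1) - 1 = a/(2+a)^2"
proof -
  have a: "a > 0" "1 + a \<noteq> 0" "1 + 2*a \<noteq> 0" "2 + a \<noteq> 0" using a_pos by auto
  have E: "Ef = (1+a)/a" using a by (simp add: Ef_def q_def field_simps)
  have q1: "1 - q = a/(1+a)" "1 - r = 2*a/(1+2*a)" "1 + q = (2+a)/(1+a)"
    using a by (simp_all add: q_def r_def field_simps)
  have S: "S2 = (2+a)*(1+2*a)/(2*a^2)" unfolding S2_def q1 using alg4[OF a(1)] by simp
  show "(a/(2+a)) * (Ef + Ef - 1) = 1" using alg1[OF a(1)] unfolding E .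
  show "S2 - Ef * Ef = 1/(2*a)" using alg2[OF a(1)] unfolding E S .
  show "(a/(2+a))^2 * (2*S2 + 2*(Ef*Ef) - 4*Ef + 1) - 1 = a/(2+a)^2"
    using alg3[OF a(1)] unfolding E S .
qed

lemma main:
  fixes i :: int
  defines "y \<equiv> \<lambda>\<omega>. (a/(2+a)) * (1 + (\<Sum>j. \<rho> powr dfwd D i (Suc j) \<omega>) + (\<Sum>j. \<rho> powr dbwd D i (Suc j) \<omega>))"
  shows "expectation y = 1 \<and> variance y = a/(2+a)^2 \<and> variance (\<lambda>\<omega>. \<Sum>j. \<rho> powr dfwd D i j \<omega>) = 1/(2*a)"
proof -
  define K where "K = a/(2+a)"
  have u: "(\<lambda>\<omega>. \<Sum>j. \<rho> powr dfwd D i j \<omega>) = uf i" by (simp add: fun_eq_iff uf_def F_def)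
  have varu: "variance (uf i) = 1/(2*a)"
  proof -
    have i1: "integrable M (uf i)" "integral\<^sup>L M (uf i) = Ef" using hb_uf[of i] by (auto simp: has_bochner_integral_iff)
    have i2: "integrable M (\<lambda>x. uf i x * uf i x)" "integral\<^sup>L M (\<lambda>x. uf i x * uf i x) = S2"
      using hb_uf2[of i] by (auto simp: has_bochner_integral_iff)
    show ?thesis using vals(2) by (subst variance_eq) (auto simp: i1 i2 power2_eq_square)
  qed
  define Y where "Y \<omega> = K * (uf i \<omega> + ub i \<omega> - 1)" for \<omega>
  have AEy: "AE \<omega> in M. y \<omega> = Y \<omega>"
    using AEF[of i] AEG[of i]
  proof eventually_elim
    case (elim \<omega>)
    then have "(\<Sum>j. F i (Suc j) \<omega>) = uf i \<omega> - 1" "(\<Sum>j. G i (Suc j) \<omega>) = ub i \<omega> - 1"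
      using suminf_split_head[of "\<lambda>j. F i j \<omega>"] suminf_split_head[of "\<lambda>j. G i j \<omega>"]
      by (auto simp: uf_def ub_def F0)
    then have s: "(\<Sum>j. \<rho> powr dfwd D i (Suc j) \<omega>) = uf i \<omega> - 1" "(\<Sum>j. \<rho> powr dbwd D i (Suc j) \<omega>) = ub i \<omega> - 1"
      unfolding F_def G_def by auto
    show ?case unfolding y_def Y_def K_def s by (simp add: algebra_simps)
  qed
  have ymeas[measurable]: "y \<in> borel_measurable M" unfolding y_def dfwd_def dbwd_def by measurable
  have Ymeas[measurable]: "Y \<in> borel_measurable M" unfolding Y_def by measurable
  have hY: "has_bochner_integral M Y (K * (Ef + Ef - 1))"
    unfolding Y_def
    by (intro has_bochner_integral_mult_right has_bochner_integral_diff has_bochner_integral_add hb_uf hb_ub hb_const)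
  have hZ: "has_bochner_integral M (\<lambda>\<omega>. K^2 * (uf i \<omega> * uf i \<omega> + ub i \<omega> * ub i \<omega> + 2 * (uf i \<omega> * ub i \<omega>) - 2 * uf i \<omega> - 2 * ub i \<omega> + 1))
     (K^2 * (S2 + S2 + 2 * (Ef * Ef) - 2 * Ef - 2 * Ef + 1))"
    by (intro has_bochner_integral_mult_right has_bochner_integral_diff has_bochner_integral_add
        hb_uf hb_ub hb_const hb_uf2 hb_ub2 hb_ufb)
  have Z: "(\<lambda>\<omega>. K^2 * (uf i \<omega> * uf i \<omega> + ub i \<omega> * ub i \<omega> + 2 * (uf i \<omega> * ub i \<omega>) - 2 * uf i \<omega> - 2 * ub i \<omega> + 1))
     = (\<lambda>\<omega>. (Y \<omega>)^2)" by (simp add: fun_eq_iff Y_def power2_eq_square algebra_simps)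
  have hY2: "has_bochner_integral M (\<lambda>\<omega>. (Y \<omega>)^2) (K^2 * (2*S2 + 2*(Ef*Ef) - 4*Ef + 1))"
    using hZ unfolding Z by (simp add: algebra_simps)
  have hy: "has_bochner_integral M y (K * (Ef + Ef - 1))"
    using hY AEy by (subst has_bochner_integral_cong_AE) auto
  have hy2: "has_bochner_integral M (\<lambda>\<omega>. (y \<omega>)^2) (K^2 * (2*S2 + 2*(Ef*Ef) - 4*Ef + 1))"
    using hY2 AEy by (subst has_bochner_integral_cong_AE) auto
  have "expectation y = K * (Ef + Ef - 1)" by (rule has_bochner_integral_integral_eq[OF hy])
  also have "\<dots> = 1" unfolding K_def by (rule vals(1))
  finally have Ey: "expectation y = 1" .
  have "variance y = K^2 * (2*S2 + 2*(Ef*Ef) - 4*Ef + 1) - 1"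
    using hy hy2 Ey by (subst variance_eq) (auto simp: has_bochner_integral_iff)
  then have "variance y = a/(2+a)^2" using vals(3) unfolding K_def by simp
  moreover have u': "(\<Sum>j. \<rho> powr dfwd D i j x) = uf i x" for x by (simp add: uf_def F_def)
  ultimately show ?thesis using Ey varu by (simp add: u u')
qed

end


theorem mainTheorem9:
  fixes M :: "'a measure" and D :: "int \<Rightarrow> 'a \<Rightarrow> real"
    and \<rho> :: real and i :: int
  assumes "prob_space M"
    and "\<rho> > 0" and "\<rho> < 1"
    and "prob_space.indep_vars M (\<lambda>_. borel) D UNIV"
    and "\<And>m. distributed M lborel (D m) (exponential_density 1)"
  defines "K \<equiv> - ln \<rho> / (2 - ln \<rho>)"
  defines "y \<equiv> (\<lambda>\<omega>. K * (1 + (\<Sum>j. \<rho> powr dfwd D i (Suc j) \<omega>)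
                            + (\<Sum>j. \<rho> powr dbwd D i (Suc j) \<omega>)))"
  defines "u \<equiv> (\<lambda>\<omega>. \<Sum>j. \<rho> powr dfwd D i j \<omega>)"
  shows "prob_space.expectation M y = 1
       \<and> prob_space.variance M y = - ln \<rho> / (2 - ln \<rho>)\<^sup>2
       \<and> prob_space.variance M u = - 1 / (2 * ln \<rho>)"
proof -
  have S: "setting M D \<rho>" unfolding setting_def setting_axioms_def using assms(1-5) by auto
  interpret s: setting M D \<rho> by (rule S)
  have a: "s.a = - ln \<rho>" by (simp add: s.a_def)
  have K: "K = s.a / (2 + s.a)" unfolding K_def a by simp
  have e1: "- ln \<rho> / (2 - ln \<rho>)\<^sup>2 = s.a / (2 + s.a)^2" unfolding a by simp
  have e2: "- 1 / (2 * ln \<rho>) = 1 / (2 * s.a)" unfolding a by simp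
  show ?thesis unfolding y_def u_def K e1 e2 by (rule s.main)
qed

end
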